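(* Assume $m\le n$. Then $\mathcal{T}_I(\mathbf{x})\ne\emptyset$ for every Generalized Nash equilibrium $\mathbf{x}$ of $G^{(2)}$.
   Context: $G^{(2)}$ is a Fragile multi-CPR Game with $n\ge1$ players and $m\ge1$ CPRs: $[k]=\{1,\dots,k\}$, $C_m=\{(x_1,\dots,x_m)\in[0,1]^m:\sum_j x_j\le1\}$, $\mathcal{C}_n=\prod_{i\in[n]}C_m$, $\mathcal{C}_{-i}=\prod_{[n]\setminus\{i\}}C_m$. A profile is $\mathbf{x}=(\mathbf{x}_1,\dots,\mathbf{x}_n)$, $\mathbf{x}_i=(x_{i1},\dots,x_{im})$; write $\mathbf{x}=(\mathbf{x}_i,\mathbf{x}_{-i})$; $\mathbf{x}_T^{(j)}=\sum_i x_{ij}$, $\mathbf{x}_T^{j|i}=\sum_{\ell\ne i}x_{\ell j}$. Each CPR $j$ has return rate $\mathcal{R}_j(t)>1$ and failure probability $p_j(t)\in[0,1]$; each player $i$ has parameters $a_i,k_i$. $\mathcal{F}_{ij}(t)=(\mathcal{R}_j(t)-1)^{a_i}(1-p_j(t))-k_ip_j(t)$; utility $\mathcal{V}_i(\mathbf{x}_i;\mathbf{x}_{-i})=\sum_j x_{ij}^{a_i}\mathcal{F}_{ij}(\mathbf{x}_T^{(j)})$. Assumption: (1) $p_j(0)=0$, $p_j(t)=1$ for $t\ge1$; (2) $a_i\in(0,1]$, $k_i>0$; (3) each $\mathcal{F}_{ij}$ (continuous on $[0,1]$) has strictly negative first and second derivatives on $(0,1)$. $\omega_{ij}\in(0,1)$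 is the unique zero of $\mathcal{F}_{ij}$ in $(0,1)$. $A(\mathbf{x}_{-i})=\{j:\mathbf{x}_T^{j|i}<\omega_{ij}\}$. $\vartheta_i(\mathbf{x}_{-i})=C_m\cap\big(\prod_{j\in A(\mathbf{x}_{-i})}[0,\omega_{ij}-\mathbf{x}_T^{j|i}]\times\prod_{j\notin A(\mathbf{x}_{-i})}\{0\}\big)$. A Generalized Nash equilibrium is $\mathbf{x}\in\mathcal{C}_n$ with, for all $i$, $\mathbf{x}_i\in\vartheta_i(\mathbf{x}_{-i})$ and $\mathcal{V}_i(\mathbf{x}_i;\mathbf{x}_{-i})\ge\mathcal{V}_i(\mathbf{z};\mathbf{x}_{-i})$ for all $\mathbf{z}\in\vartheta_i(\mathbf{x}_{-i})$. $\psi_{ij}(x;s)=x\,\mathcal{F}_{ij}'(x+s)+a_i\mathcal{F}_{ij}(x+s)$. For a GNE $\mathbf{x}$: $J_{\mathbf{x}_{-i}}=\{j\in A(\mathbf{x}_{-i}):x_{ij}\ne0\}$; $\mathbf{x}_i$ is of Type I if $\sum_{j\in J_{\mathbf{x}_{-i}}}x_{ij}<1$ and $\psi_{ij}(x_{ij};\mathbf{x}_T^{j|i})=0$ for all $j\in J_{\mathbf{x}_{-i}}$; of Type II if $\sum_{j\in J_{\mathbf{x}_{-i}}}x_{ij}=1$ and there is $\kappa_0\ge0$ with $x_{ij}^{a_i-1}\psi_{ij}(x_{ij};\mathbf{x}_T^{j|i})=\kappa_0$ for all $j\in J_{\mathbf{x}_{-i}}$. $\mathcal{T}_I(\mathbf{x})=\{i\in[n]:\mathbf{x}_i\text{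 is of Type I}\}$. *)

theory Defs
  imports "HOL-Analysis.Analysis"
begin

(* Players are indexed by {1..n}, CPRs by {1..m}.
   A strategy of a player is a function z :: nat => real (only j in {1..m} matter);
   a profile is x :: nat => nat => real, x i j = x_{ij}. *)

definition inC :: "nat \<Rightarrow> (nat \<Rightarrow> real) \<Rightarrow> bool" where
  "inC m z \<longleftrightarrow> (\<forall>j\<in>{1..m}. 0 \<le> z j \<and> z j \<le> 1) \<and> (\<Sum>j\<in>{1..m}. z j) \<le> 1"

definition inCn :: "nat \<Rightarrow> nat \<Rightarrow> (nat \<Rightarrow> nat \<Rightarrow> real) \<Rightarrow> bool" where
  "inCn n m x \<longleftrightarrow> (\<forall>i\<in>{1..n}. inC m (x i))"

definition xT :: "nat \<Rightarrow> (nat \<Rightarrow> nat \<Rightarrow> real) \<Rightarrow> nat \<Rightarrow> real" where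
  "xT n x j = (\<Sum>i\<in>{1..n}. x i j)"

definition xTex :: "nat \<Rightarrow> (nat \<Rightarrow> nat \<Rightarrow> real) \<Rightarrow> nat \<Rightarrow> nat \<Rightarrow> real" where
  "xTex n x i j = (\<Sum>l\<in>{1..n} - {i}. x l j)"

definition FF :: "(nat \<Rightarrow> real \<Rightarrow> real) \<Rightarrow> (nat \<Rightarrow> real \<Rightarrow> real) \<Rightarrow> (nat \<Rightarrow> real) \<Rightarrow> (nat \<Rightarrow> real)
                  \<Rightarrow> nat \<Rightarrow> nat \<Rightarrow> real \<Rightarrow> real" where
  "FF R p a k i j t = (R j t - 1) powr (a i) * (1 - p j t) - k i * p j t"

definition util :: "(nat \<Rightarrow> real \<Rightarrow> real) \<Rightarrow> (nat \<Rightarrow> real \<Rightarrow> real) \<Rightarrow> (nat \<Rightarrow> real) \<Rightarrow> (nat \<Rightarrow> real)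
                   \<Rightarrow> nat \<Rightarrow> nat \<Rightarrow> nat \<Rightarrow> (nat \<Rightarrow> nat \<Rightarrow> real) \<Rightarrow> real" where
  "util R p a k n m i x = (\<Sum>j\<in>{1..m}. x i j powr (a i) * FF R p a k i j (xT n x j))"

definition omega :: "(nat \<Rightarrow> real \<Rightarrow> real) \<Rightarrow> (nat \<Rightarrow> real \<Rightarrow> real) \<Rightarrow> (nat \<Rightarrow> real) \<Rightarrow> (nat \<Rightarrow> real)
                    \<Rightarrow> nat \<Rightarrow> nat \<Rightarrow> real" where
  "omega R p a k i j = (THE w. w \<in> {0<..<1} \<and> FF R p a k i j w = 0)"

definition Aset :: "(nat \<Rightarrow> real \<Rightarrow> real) \<Rightarrow> (nat \<Rightarrow> real \<Rightarrow> real) \<Rightarrow> (nat \<Rightarrow> real) \<Rightarrow> (nat \<Rightarrow> real)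
                   \<Rightarrow> nat \<Rightarrow> nat \<Rightarrow> nat \<Rightarrow> (nat \<Rightarrow> nat \<Rightarrow> real) \<Rightarrow> nat set" where
  "Aset R p a k n m i x = {j\<in>{1..m}. xTex n x i j < omega R p a k i j}"

definition feas :: "(nat \<Rightarrow> real \<Rightarrow> real) \<Rightarrow> (nat \<Rightarrow> real \<Rightarrow> real) \<Rightarrow> (nat \<Rightarrow> real) \<Rightarrow> (nat \<Rightarrow> real)
                   \<Rightarrow> nat \<Rightarrow> nat \<Rightarrow> nat \<Rightarrow> (nat \<Rightarrow> nat \<Rightarrow> real) \<Rightarrow> (nat \<Rightarrow> real) set" where
  "feas R p a k n m i x = {z. inC m z \<and>
      (\<forall>j\<in>{1..m}. if j \<in> Aset R p a k n m i x
                     then 0 \<le> z j \<and> z j \<le> omega R p a k i j - xTex n x i j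
                     else z j = 0)}"

definition GNE :: "(nat \<Rightarrow> real \<Rightarrow> real) \<Rightarrow> (nat \<Rightarrow> real \<Rightarrow> real) \<Rightarrow> (nat \<Rightarrow> real) \<Rightarrow> (nat \<Rightarrow> real)
                  \<Rightarrow> nat \<Rightarrow> nat \<Rightarrow> (nat \<Rightarrow> nat \<Rightarrow> real) \<Rightarrow> bool" where
  "GNE R p a k n m x \<longleftrightarrow> inCn n m x \<and>
     (\<forall>i\<in>{1..n}. x i \<in> feas R p a k n m i x \<and>
        (\<forall>z\<in>feas R p a k n m i x. util R p a k n m i x \<ge> util R p a k n m i (x(i := z))))"

definition psi :: "(nat \<Rightarrow> real \<Rightarrow> real) \<Rightarrow> (nat \<Rightarrow> real \<Rightarrow> real) \<Rightarrow> (nat \<Rightarrow> real) \<Rightarrow> (nat \<Rightarrow> real)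
                  \<Rightarrow> nat \<Rightarrow> nat \<Rightarrow> real \<Rightarrow> real \<Rightarrow> real" where
  "psi R p a k i j y s = y * deriv (FF R p a k i j) (y + s) + a i * FF R p a k i j (y + s)"

definition Jset :: "(nat \<Rightarrow> real \<Rightarrow> real) \<Rightarrow> (nat \<Rightarrow> real \<Rightarrow> real) \<Rightarrow> (nat \<Rightarrow> real) \<Rightarrow> (nat \<Rightarrow> real)
                   \<Rightarrow> nat \<Rightarrow> nat \<Rightarrow> nat \<Rightarrow> (nat \<Rightarrow> nat \<Rightarrow> real) \<Rightarrow> nat set" where
  "Jset R p a k n m i x = {j \<in> Aset R p a k n m i x. x i j \<noteq> 0}"

definition typeI :: "(nat \<Rightarrow> real \<Rightarrow> real) \<Rightarrow> (nat \<Rightarrow> real \<Rightarrow> real) \<Rightarrow> (nat \<Rightarrow> real) \<Rightarrow> (nat \<Rightarrow> real)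
                    \<Rightarrow> nat \<Rightarrow> nat \<Rightarrow> nat \<Rightarrow> (nat \<Rightarrow> nat \<Rightarrow> real) \<Rightarrow> bool" where
  "typeI R p a k n m i x \<longleftrightarrow>
     (\<Sum>j\<in>Jset R p a k n m i x. x i j) < 1 \<and>
     (\<forall>j\<in>Jset R p a k n m i x. psi R p a k i j (x i j) (xTex n x i j) = 0)"

definition TI :: "(nat \<Rightarrow> real \<Rightarrow> real) \<Rightarrow> (nat \<Rightarrow> real \<Rightarrow> real) \<Rightarrow> (nat \<Rightarrow> real) \<Rightarrow> (nat \<Rightarrow> real)
                 \<Rightarrow> nat \<Rightarrow> nat \<Rightarrow> (nat \<Rightarrow> nat \<Rightarrow> real) \<Rightarrow> nat set" where
  "TI R p a k n m x = {i\<in>{1..n}. typeI R p a k n m i x}"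

end

theory Submission imports Defs begin

lemma zero_props:
  fixes f :: "real \<Rightarrow> real"
  assumes c: "continuous_on {0..1} f"
    and d: "\<forall>t\<in>{0<..<1}. f differentiable (at t) \<and> deriv f t < 0"
    and f0: "f 0 > 0" and f1: "f 1 < 0"
  defines "w \<equiv> (THE w. w \<in> {0<..<1} \<and> f w = 0)"
  shows "w \<in> {0<..<1} \<and> f w = 0 \<and> (\<forall>t. 0 \<le> t \<and> t < w \<longrightarrow> f t > 0)"
proof -
  have dec: "f v < f u" if "0 \<le> u" "u < v" "v \<le> 1" for u v
  proof -
    have "f u > f v"
    proof (rule DERIV_neg_imp_decreasing_open[OF \<open>u < v\<close>])
      fix t assume "u < t" "t < v"
      then have "t \<in> {0<..<1}" using that by auto
      then show "\<exists>y. DERIV f t :> y \<and> y < 0"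
        using d DERIV_deriv_iff_real_differentiable by blast
    next
      show "continuous_on {u..v} f" using c by (rule continuous_on_subset) (use that in auto)
    qed
    then show ?thesis by simp
  qed
  obtain w0 where w0: "0 \<le> w0" "w0 \<le> 1" "f w0 = 0"
    using IVT2'[of f 1 0 0, OF _ _ _ c] f0 f1 by auto
  have w0i: "w0 \<in> {0<..<1}" using w0 f0 f1 by (cases "w0 = 0"; cases "w0 = 1") auto
  have uniq: "y = w0" if "y \<in> {0<..<1} \<and> f y = 0" for y
  proof (rule ccontr)
    assume "y \<noteq> w0"
    then consider "y < w0" | "w0 < y" by linarith
    then show False using dec[of y w0] dec[of w0 y] that w0 by cases auto
  qed
  have "w = w0" unfolding w_def
    by (rule the_equality) (use w0i w0 uniq in auto)
  then show ?thesis using w0i w0 dec[of _ w0] by auto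
qed

lemma sum_upd:
  fixes G :: "nat \<Rightarrow> real \<Rightarrow> real"
  assumes "finite A" "j \<in> A"
  shows "(\<Sum>l\<in>A. G l ((f(j:=y)) l)) = (\<Sum>l\<in>A. G l (f l)) - G j (f j) + G j y"
proof -
  have "(\<Sum>l\<in>A. G l ((f(j:=y)) l)) = G j y + (\<Sum>l\<in>A-{j}. G l ((f(j:=y)) l))"
    using assms by (simp add: sum.remove)
  also have "(\<Sum>l\<in>A-{j}. G l ((f(j:=y)) l)) = (\<Sum>l\<in>A-{j}. G l (f l))"
    by (rule sum.cong) auto
  also have "(\<Sum>l\<in>A. G l (f l)) = G j (f j) + (\<Sum>l\<in>A-{j}. G l (f l))"
    using assms by (simp add: sum.remove)
  ultimately show ?thesis by simp
qed

theorem lemma7: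
  fixes R p :: "nat \<Rightarrow> real \<Rightarrow> real" and a k :: "nat \<Rightarrow> real" and n m :: nat
    and x :: "nat \<Rightarrow> nat \<Rightarrow> real"
  assumes n: "n \<ge> 1" and m: "m \<ge> 1" and mn: "m \<le> n"
    and R: "\<forall>j\<in>{1..m}. \<forall>t\<ge>0. R j t > 1"
    and p_range: "\<forall>j\<in>{1..m}. \<forall>t\<ge>0. 0 \<le> p j t \<and> p j t \<le> 1"
    and p0: "\<forall>j\<in>{1..m}. p j 0 = 0"
    and p1: "\<forall>j\<in>{1..m}. \<forall>t\<ge>1. p j t = 1"
    and a: "\<forall>i\<in>{1..n}. 0 < a i \<and> a i \<le> 1"
    and k: "\<forall>i\<in>{1..n}. k i > 0"
    and Fcont: "\<forall>i\<in>{1..n}. \<forall>j\<in>{1..m}. continuous_on {0..1} (FF R p a k i j)"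
    and Fd1: "\<forall>i\<in>{1..n}. \<forall>j\<in>{1..m}. \<forall>t\<in>{0<..<1}.
               FF R p a k i j differentiable (at t) \<and> deriv (FF R p a k i j) t < 0"
    and Fd2: "\<forall>i\<in>{1..n}. \<forall>j\<in>{1..m}. \<forall>t\<in>{0<..<1}.
               deriv (FF R p a k i j) differentiable (at t) \<and> deriv (deriv (FF R p a k i j)) t < 0"
    and eq: "GNE R p a k n m x"
  shows "TI R p a k n m x \<noteq> {}"
proof -
  let ?F = "FF R p a k"
  let ?w = "omega R p a k"
  have om: "?w i j \<in> {0<..<1} \<and> ?F i j (?w i j) = 0 \<and> (\<forall>t. 0 \<le> t \<and> t < ?w i j \<longrightarrow> ?F i j t > 0)"
    if i: "i \<in> {1..n}" and j: "j \<in> {1..m}" for i j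
  proof -
    have "?F i j 0 = (R j 0 - 1) powr a i" using p0 j by (simp add: FF_def)
    moreover have "R j 0 - 1 > 0" using R j by auto
    ultimately have f0: "?F i j 0 > 0" by simp
    have f1: "?F i j 1 < 0" using p1 j k i by (simp add: FF_def)
    show ?thesis unfolding omega_def
      by (rule zero_props) (use Fcont Fd1 i j f0 f1 in auto)
  qed
  have inCn: "inCn n m x" and fe: "\<And>i. i \<in> {1..n} \<Longrightarrow> x i \<in> feas R p a k n m i x"
    and opt: "\<And>i z. i \<in> {1..n} \<Longrightarrow> z \<in> feas R p a k n m i x \<Longrightarrow>
                  util R p a k n m i x \<ge> util R p a k n m i (x(i := z))"
    using eq unfolding GNE_def by auto
  have nonneg: "0 \<le> x i j \<and> x i j \<le> 1" if "i \<in> {1..n}" "j \<in> {1..m}" for i j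
    using inCn that unfolding inCn_def inC_def by auto
  have sumle: "sum (x i) {1..m} \<le> 1" if "i \<in> {1..n}" for i
    using inCn that unfolding inCn_def inC_def by auto
  have s_nonneg: "xTex n x i j \<ge> 0" if "j \<in> {1..m}" for i j
    unfolding xTex_def by (rule sum_nonneg) (use nonneg that in auto)
  have xT_split: "xT n x j = x i j + xTex n x i j" if "i \<in> {1..n}" for i j
    unfolding xT_def xTex_def using that by (simp add: sum.remove)
  have feasx: "(if j \<in> Aset R p a k n m i x then 0 \<le> x i j \<and> x i j \<le> ?w i j - xTex n x i j
                else x i j = 0)" if "i \<in> {1..n}" "j \<in> {1..m}" for i j
    using fe[OF that(1)] that(2) unfolding feas_def by auto
  have xT_lt: "xT n x j < 1" if j: "j \<in> {1..m}" for j
  proof (cases "\<exists>i\<in>{1..n}. x i j \<noteq> 0")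
    case True
    then obtain i where i: "i \<in> {1..n}" "x i j \<noteq> 0" by auto
    then have "j \<in> Aset R p a k n m i x" using feasx[OF i(1) j] by (auto split: if_splits)
    then have "x i j \<le> ?w i j - xTex n x i j" using feasx[OF i(1) j] by auto
    then show ?thesis using xT_split[OF i(1), of j] om[OF i(1) j] by auto
  next
    case False
    then show ?thesis unfolding xT_def by simp
  qed
  obtain i where i: "i \<in> {1..n}" and isum: "sum (x i) {1..m} < 1"
  proof (rule ccontr)
    assume "\<not> thesis"
    with that have ge: "\<forall>i\<in>{1..n}. sum (x i) {1..m} \<ge> 1" by force
    have "real n = (\<Sum>i\<in>{1..n}. 1)" by simp
    also have "\<dots> \<le> (\<Sum>i\<in>{1..n}. sum (x i) {1..m})" by (rule sum_mono) (use ge in auto)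
    also have "\<dots> = (\<Sum>j\<in>{1..m}. xT n x j)" unfolding xT_def by (rule sum.swap)
    also have "\<dots> < (\<Sum>j\<in>{1..m}. 1)" by (rule sum_strict_mono) (use xT_lt m in auto)
    also have "\<dots> = real m" by simp
    finally show False using mn by simp
  qed
  define U where "U z = (\<Sum>l\<in>{1..m}. z l powr a i * ?F i l (z l + xTex n x i l))" for z
  have xT_upd: "xT n (x(i:=z)) l = z l + xTex n x i l" for z l
  proof -
    have "xT n (x(i:=z)) l = z l + (\<Sum>l'\<in>{1..n}-{i}. (x(i:=z)) l' l)"
      unfolding xT_def using i by (simp add: sum.remove)
    also have "(\<Sum>l'\<in>{1..n}-{i}. (x(i:=z)) l' l) = xTex n x i l"
      unfolding xTex_def by (rule sum.cong) auto
    finally show ?thesis .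
  qed
  have util_upd: "util R p a k n m i (x(i:=z)) = U z" for z
    unfolding util_def U_def xT_upd by simp
  have opt': "U z \<le> U (x i)" if "z \<in> feas R p a k n m i x" for z
    using opt[OF i that] util_upd[of z] util_upd[of "x i"] by simp
  define h where "h j y = y powr a i * ?F i j (y + xTex n x i j)" for j y
  have U_upd: "U ((x i)(j:=y)) = U (x i) - h j (x i j) + h j y" if "j \<in> {1..m}" for j y
    unfolding U_def h_def
    using sum_upd[of "{1..m}" j "\<lambda>l v. v powr a i * ?F i l (v + xTex n x i l)" "x i" y] that
    by simp
  have feas_upd: "(x i)(j:=y) \<in> feas R p a k n m i x"
    if j: "j \<in> Aset R p a k n m i x" and y: "0 \<le> y" "y \<le> ?w i j - xTex n x i j" "y \<le> 1"
      "sum (x i) {1..m} - x i j + y \<le> 1" for j y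
  proof -
    have jm: "j \<in> {1..m}" using j unfolding Aset_def by auto
    have "sum ((x i)(j:=y)) {1..m} = sum (x i) {1..m} - x i j + y"
      using sum_upd[of "{1..m}" j "\<lambda>l v. v" "x i" y] jm by simp
    then show ?thesis
      unfolding feas_def inC_def using nonneg[OF i] feasx[OF i] y j by auto
  qed
  have "typeI R p a k n m i x"
    unfolding typeI_def
  proof
    have "(\<Sum>j\<in>Jset R p a k n m i x. x i j) = sum (x i) {1..m}"
    proof (rule sum.mono_neutral_left)
      show "Jset R p a k n m i x \<subseteq> {1..m}" unfolding Jset_def Aset_def by auto
      show "\<forall>j\<in>{1..m} - Jset R p a k n m i x. x i j = 0"
      proof
        fix j assume "j \<in> {1..m} - Jset R p a k n m i x"
        then show "x i j = 0" using feasx[OF i, of j] unfolding Jset_def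
          by (cases "j \<in> Aset R p a k n m i x") auto
      qed
    qed simp
    then show "(\<Sum>j\<in>Jset R p a k n m i x. x i j) < 1" using isum by simp
  next
    show "\<forall>j\<in>Jset R p a k n m i x. psi R p a k i j (x i j) (xTex n x i j) = 0"
    proof
      fix j assume jJ: "j \<in> Jset R p a k n m i x"
      then have jA: "j \<in> Aset R p a k n m i x" and jm: "j \<in> {1..m}"
        unfolding Jset_def Aset_def by auto
      define s where "s = xTex n x i j"
      define xij where "xij = x i j"
      have s0: "s \<ge> 0" using s_nonneg[OF jm] s_def by simp
      have xpos: "xij > 0" using jJ feasx[OF i jm] unfolding Jset_def xij_def by auto
      have xle: "xij \<le> ?w i j - s" using jA feasx[OF i jm] unfolding s_def xij_def by auto
      have omj: "?w i j \<in> {0<..<1}" "?F i j (?w i j) = 0" "\<forall>t. 0 \<le> t \<and> t < ?w i j \<longrightarrow> ?F i j t > 0"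
        using om[OF i jm] by auto
      have xlt: "xij < ?w i j - s"
      proof (rule ccontr)
        assume "\<not> ?thesis"
        then have xe: "xij = ?w i j - s" using xle by simp
        have fz: "(x i)(j := xij/2) \<in> feas R p a k n m i x"
          by (rule feas_upd[OF jA]) (use xpos xle omj s0 isum xij_def s_def in auto)
        have "h j xij = 0" unfolding h_def using xe omj s_def xij_def by simp
        moreover have "h j (xij/2) > 0"
        proof -
          have "0 \<le> xij/2 + s" "xij/2 + s < ?w i j" using xpos s0 xe by (auto simp: field_simps)
          then have "?F i j (xij/2 + s) > 0" using omj(3) by blast
          then show ?thesis unfolding h_def s_def using xpos by simp
        qed
        ultimately have "U ((x i)(j := xij/2)) > U (x i)"
          using U_upd[OF jm, of "xij/2"] xij_def by simp
        then show False using opt'[OF fz] by simp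
      qed
      define d where "d = min xij (min (?w i j - s - xij) (1 - sum (x i) {1..m}))"
      have d0: "d > 0" unfolding d_def using xpos xlt isum by auto
      have loc: "\<forall>y. \<bar>xij - y\<bar> < d \<longrightarrow> h j y \<le> h j xij"
      proof (intro allI impI)
        fix y assume "\<bar>xij - y\<bar> < d"
        then have y: "0 \<le> y" "y \<le> ?w i j - s" "sum (x i) {1..m} - xij + y \<le> 1"
          unfolding d_def by auto
        have "y \<le> 1" using y omj s0 by auto
        then have fz: "(x i)(j := y) \<in> feas R p a k n m i x"
          using feas_upd[OF jA] y s_def xij_def by auto
        show "h j y \<le> h j xij" using opt'[OF fz] U_upd[OF jm, of y] xij_def by simp
      qed
      have ts: "xij + s \<in> {0<..<1}" using xpos s0 xlt omj by auto
      define D where "D = deriv (?F i j) (xij + s)"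
      have dF: "DERIV (?F i j) (xij + s) :> D"
        using Fd1 i jm ts D_def DERIV_deriv_iff_real_differentiable by blast
      then have dF': "DERIV (\<lambda>y. ?F i j (y + s)) xij :> D" by (simp add: DERIV_shift)
      have ai: "0 < a i" using a i by auto
      have dh: "DERIV (h j) xij :> (a i * xij powr (a i - 1)) * ?F i j (xij + s) + xij powr a i * D"
        unfolding h_def s_def[symmetric]
        using DERIV_mult[OF has_real_derivative_powr[OF xpos, of "a i"] dF'] by (simp add: mult.commute)
      have "(a i * xij powr (a i - 1)) * ?F i j (xij + s) + xij powr a i * D = 0"
        by (rule DERIV_local_max[OF dh d0 loc])
      moreover have "xij powr a i = xij powr (a i - 1) * xij"
        using xpos by (simp add: powr_diff)
      ultimately have "xij powr (a i - 1) * (xij * D + a i * ?F i j (xij + s)) = 0"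
        by (simp add: algebra_simps)
      moreover have "xij powr (a i - 1) > 0" using xpos by simp
      ultimately have "xij * D + a i * ?F i j (xij + s) = 0" by simp
      then show "psi R p a k i j (x i j) (xTex n x i j) = 0"
        unfolding psi_def D_def xij_def s_def .
    qed
  qed
  then show ?thesis unfolding TI_def using i by auto
qed

end
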